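(* There is $p_0$ such that for every prime $p>p_0$ with $p\equiv 1\pmod 3$ and every set $A\subseteq\mathbb{Z}_p$ with $|A|=(2p+1)/3$, one has $\Lambda_3(A)>0.23$.
   Context: For $f:\mathbb{Z}_p\to\mathbb{C}$, $\Lambda_3(f)=\frac{1}{p^2}\sum_{n,d\in\mathbb{Z}_p} f(n)f(n+d)f(n+2d)$; a set is identified with its indicator function. *)

theory Defs
  imports Complex_Main "HOL-Computational_Algebra.Primes"
begin

definition Lambda3 :: "int \<Rightarrow> (int \<Rightarrow> complex) \<Rightarrow> complex" where
  "Lambda3 p f = (1 / of_int (p^2)) *
     (\<Sum>n\<in>{0..<p}. \<Sum>d\<in>{0..<p}. f n * f ((n + d) mod p) * f ((n + 2*d) mod p))"

definition ind :: "int set \<Rightarrow> int \<Rightarrow> complex" where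
  "ind A x = (if x \<in> A then 1 else 0)"

end

theory Submission imports Defs begin

definition ee :: "int \<Rightarrow> int \<Rightarrow> complex" where
  "ee p t = cis (2 * pi * of_int t / of_int p)"

lemma ee_add: "ee p (a + b) = ee p a * ee p b"
  by (simp add: ee_def cis_mult add_divide_distrib distrib_left)

lemma ee_0[simp]: "ee p 0 = 1" by (simp add: ee_def)

lemma ee_minus: "ee p (- a) = cnj (ee p a)"
  by (simp add: ee_def cis_cnj)

lemma ee_norm[simp]: "norm (ee p a) = 1" by (simp add: ee_def)

lemma ee_dvd: assumes "p dvd t" "p \<noteq> 0" shows "ee p t = 1"
proof -
  from assms obtain k where k: "t = p * k" by auto
  have "2 * pi * of_int t / of_int p = 2 * pi * of_int k" using assms(2) by (simp add: k)
  then show ?thesis unfolding ee_def by (simp add: cis_multiple_2pi)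
qed

lemma ee_mod: assumes "p \<noteq> 0" shows "ee p (t mod p) = ee p t"
proof -
  have "t = t mod p + p * (t div p)" by simp
  then have "ee p t = ee p (t mod p) * ee p (p * (t div p))" by (metis ee_add)
  also have "ee p (p * (t div p)) = 1" using assms by (intro ee_dvd) auto
  finally show ?thesis by simp
qed

lemma ee_neq1: assumes "\<not> p dvd t" "p > 0" shows "ee p t \<noteq> 1"
proof
  assume "ee p t = 1"
  then have "cos (2 * pi * of_int t / of_int p) = 1" unfolding ee_def
    by (metis Re_complex_of_real cis.sel(1) one_complex.sel(1))
  then obtain n :: int where n: "2 * pi * of_int t / of_int p = of_int n * 2 * pi"
    using cos_one_2pi_int by blast
  then have "of_int t = of_int n * (of_int p :: real)" using assms(2) by (simp add: field_simps)
  then have "t = n * p" by (metis of_int_eq_iff of_int_mult)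
  then show False using assms(1) by simp
qed

lemma ee_pow: "ee p t ^ n = ee p (int n * t)"
  by (simp add: ee_def DeMoivre mult_ac)

lemma orth: assumes "p > 0"
  shows "(\<Sum>x\<in>{0..<p}. ee p (m * x)) = (if p dvd m then of_int p else 0)"
proof -
  have img: "{0..<p} = int ` {0..<nat p}" using assms
    by (simp add: image_int_atLeastLessThan)
  have "(\<Sum>x\<in>{0..<p}. ee p (m * x)) = (\<Sum>n\<in>{0..<nat p}. ee p (m * int n))"
    unfolding img by (subst sum.reindex) (auto simp: inj_on_def)
  also have "\<dots> = (\<Sum>n<nat p. ee p m ^ n)"
    by (intro sum.cong) (auto simp: ee_pow mult.commute lessThan_atLeast0)
  finally have S: "(\<Sum>x\<in>{0..<p}. ee p (m * x)) = (\<Sum>n<nat p. ee p m ^ n)" .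
  show ?thesis
  proof (cases "p dvd m")
    case True
    then have "ee p m = 1" using assms by (intro ee_dvd) auto
    then show ?thesis using S True assms by simp
  next
    case False
    then have ne: "ee p m \<noteq> 1" using assms ee_neq1 by blast
    have "ee p m ^ nat p = 1" using assms by (simp add: ee_pow ee_dvd)
    then show ?thesis using S False ne by (simp add: sum_gp_strict)
  qed
qed

lemma delta_sum: assumes "(p::int) > 0"
  shows "(\<Sum>y\<in>{0..<p}. (if p dvd (c - y) then g y else (0::complex))) = g (c mod p)"
proof -
  have "(\<Sum>y\<in>{0..<p}. (if p dvd (c - y) then g y else 0)) = (\<Sum>y\<in>{0..<p}. (if y = c mod p then g y else 0))"
  proof (rule sum.cong[OF refl])
    fix y assume "y \<in> {0..<p}"
    then have ym: "y mod p = y" by (simp add: mod_pos_pos_trivial)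
    have "(p dvd (c - y)) = (c mod p = y mod p)" by (simp add: mod_eq_dvd_iff)
    then have "(p dvd (c - y)) = (y = c mod p)" using ym by auto
    then show "(if p dvd (c - y) then g y else 0) = (if y = c mod p then g y else 0)" by simp
  qed
  also have "\<dots> = (if c mod p \<in> {0..<p} then g (c mod p) else 0)" by (rule sum.delta, rule finite_atLeastLessThan_int)
  also have "\<dots> = g (c mod p)" using assms by simp
  finally show ?thesis .
qed

definition fhat :: "int \<Rightarrow> (int \<Rightarrow> complex) \<Rightarrow> int \<Rightarrow> complex" where
  "fhat p f u = (1 / of_int p) * (\<Sum>x\<in>{0..<p}. f x * ee p (- (u * x)))"

lemma inversion: assumes "p > 0"
  shows "f (c mod p) = (\<Sum>u\<in>{0..<p}. fhat p f u * ee p (u * c))"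
proof -
  have "(\<Sum>u\<in>{0..<p}. fhat p f u * ee p (u * c))
      = (1 / of_int p) * (\<Sum>u\<in>{0..<p}. \<Sum>x\<in>{0..<p}. f x * ee p (u * (c - x)))"
    unfolding fhat_def sum_distrib_left sum_distrib_right
    by (intro sum.cong refl) (simp add: mult_ac right_diff_distrib ee_add[symmetric])
  also have "\<dots> = (1 / of_int p) * (\<Sum>x\<in>{0..<p}. f x * (\<Sum>u\<in>{0..<p}. ee p ((c - x) * u)))"
    by (subst sum.swap) (simp add: sum_distrib_left mult_ac)
  also have "\<dots> = (1 / of_int p) * (\<Sum>x\<in>{0..<p}. (if p dvd (c - x) then f x * of_int p else 0))"
    using assms by (simp add: orth, intro sum.cong, auto)
  also have "\<dots> = f (c mod p)"
    using assms by (subst delta_sum) auto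
  finally show ?thesis by simp
qed


lemma shift_reindex: assumes "(p::int) > 0"
  shows "(\<Sum>d\<in>{0..<p}. G ((n + d) mod p)) = (\<Sum>z\<in>{0..<p}. (G z :: complex))"
proof (rule sum.reindex_bij_witness[where j="\<lambda>d. (n + d) mod p" and i="\<lambda>z. (z - n) mod p"])
  fix a assume "a \<in> {0..<p}"
  then show "((n + a) mod p - n) mod p = a" by (simp add: mod_diff_left_eq mod_pos_pos_trivial)
next
  fix a assume "a \<in> {0..<p}"
  then show "(n + a) mod p \<in> {0..<p}" using assms by simp
next
  fix b assume "b \<in> {0..<p}"
  then show "(n + (b - n) mod p) mod p = b" by (simp add: mod_add_right_eq mod_pos_pos_trivial)
next
  fix b assume "b \<in> {0..<p}"
  then show "(b - n) mod p \<in> {0..<p}" using assms by simp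
qed simp

lemma Lambda_as_triple: assumes "(p::int) > 0"
  shows "Lambda3 p f = (1 / of_int (p^2)) *
     (\<Sum>n\<in>{0..<p}. \<Sum>z\<in>{0..<p}. f n * f z * f ((2*z - n) mod p))"
proof -
  have "\<And>n. (\<Sum>d\<in>{0..<p}. f n * f ((n + d) mod p) * f ((n + 2*d) mod p))
        = (\<Sum>z\<in>{0..<p}. f n * f z * f ((2*z - n) mod p))"
  proof -
    fix n
    have "\<And>d. (n + 2*d) mod p = (2*((n + d) mod p) - n) mod p"
    proof -
      fix d
      have "(2*((n + d) mod p) - n) mod p = (2*(n + d) - n) mod p"
        by (metis mod_diff_left_eq mod_mult_right_eq)
      also have "2*(n + d) - n = n + 2*d" by simp
      finally show "(n + 2*d) mod p = (2*((n + d) mod p) - n) mod p" by simp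
    qed
    then have "(\<Sum>d\<in>{0..<p}. f n * f ((n + d) mod p) * f ((n + 2*d) mod p))
        = (\<Sum>d\<in>{0..<p}. (\<lambda>z. f n * f z * f ((2*z - n) mod p)) ((n + d) mod p))"
      by simp
    also have "\<dots> = (\<Sum>z\<in>{0..<p}. f n * f z * f ((2*z - n) mod p))"
      by (rule shift_reindex[OF assms])
    finally show "(\<Sum>d\<in>{0..<p}. f n * f ((n + d) mod p) * f ((n + 2*d) mod p))
        = (\<Sum>z\<in>{0..<p}. f n * f z * f ((2*z - n) mod p))" .
  qed
  then show ?thesis unfolding Lambda3_def by simp
qed

lemma triple_fourier: assumes "(p::int) > 0"
  shows "(\<Sum>n\<in>{0..<p}. \<Sum>z\<in>{0..<p}. f n * f z * f ((2*z - n) mod p))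
    = (of_int p)^2 * (\<Sum>u\<in>{0..<p}. fhat p f u * fhat p f u * fhat p f (-2*u))"
proof -
  have "(\<Sum>n\<in>{0..<p}. \<Sum>z\<in>{0..<p}. f n * f z * f ((2*z - n) mod p))
     = (\<Sum>n\<in>{0..<p}. \<Sum>z\<in>{0..<p}. \<Sum>u\<in>{0..<p}.
          fhat p f u * (f n * ee p (- (u * n))) * (f z * ee p (- ((-2*u) * z))))"
  proof (intro sum.cong refl)
    fix n z
    have "f ((2*z - n) mod p) = (\<Sum>u\<in>{0..<p}. fhat p f u * ee p (u * (2*z - n)))"
      by (rule inversion[OF assms])
    also have "\<dots> = (\<Sum>u\<in>{0..<p}. fhat p f u * (ee p (- (u * n)) * ee p (- ((-2*u) * z))))"
    proof (intro sum.cong refl)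
      fix u
      have "u * (2*z - n) = - (u * n) + - ((-2*u) * z)" by (simp add: algebra_simps)
      then have "ee p (u * (2*z - n)) = ee p (- (u * n)) * ee p (- ((-2*u) * z))" by (metis ee_add)
      then show "fhat p f u * ee p (u * (2*z - n)) = fhat p f u * (ee p (- (u * n)) * ee p (- ((-2*u) * z)))"
        by simp
    qed
    finally show "f n * f z * f ((2*z - n) mod p) = (\<Sum>u\<in>{0..<p}.
          fhat p f u * (f n * ee p (- (u * n))) * (f z * ee p (- ((-2*u) * z))))"
      by (simp add: sum_distrib_left mult_ac)
  qed
  also have "\<dots> = (\<Sum>n\<in>{0..<p}. \<Sum>u\<in>{0..<p}. \<Sum>z\<in>{0..<p}.
          fhat p f u * (f n * ee p (- (u * n))) * (f z * ee p (- ((-2*u) * z))))"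
    by (rule sum.cong[OF refl], rule sum.swap)
  also have "\<dots> = (\<Sum>u\<in>{0..<p}. \<Sum>n\<in>{0..<p}. \<Sum>z\<in>{0..<p}.
          fhat p f u * (f n * ee p (- (u * n))) * (f z * ee p (- ((-2*u) * z))))"
    by (rule sum.swap)
  also have "\<dots> = (\<Sum>u\<in>{0..<p}. fhat p f u * (\<Sum>n\<in>{0..<p}. f n * ee p (- (u * n)))
          * (\<Sum>z\<in>{0..<p}. f z * ee p (- ((-2*u) * z))))"
  proof (rule sum.cong[OF refl], rule sym)
    fix u
    show "fhat p f u * (\<Sum>n\<in>{0..<p}. f n * ee p (- (u * n)))
          * (\<Sum>z\<in>{0..<p}. f z * ee p (- ((-2*u) * z))) = (\<Sum>n\<in>{0..<p}. \<Sum>z\<in>{0..<p}.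
          fhat p f u * (f n * ee p (- (u * n))) * (f z * ee p (- ((-2*u) * z))))"
      (is "?a * ?B * ?C = _")
    proof -
      have "?a * ?B * ?C = ?a * (?B * ?C)" by (rule mult.assoc)
      also have "\<dots> = (\<Sum>n\<in>{0..<p}. \<Sum>z\<in>{0..<p}.
          fhat p f u * ((f n * ee p (- (u * n))) * (f z * ee p (- ((-2*u) * z)))))"
        by (subst sum_product, simp only: sum_distrib_left)
      also have "\<dots> = (\<Sum>n\<in>{0..<p}. \<Sum>z\<in>{0..<p}.
          fhat p f u * (f n * ee p (- (u * n))) * (f z * ee p (- ((-2*u) * z))))"
        by (simp only: mult.assoc)
      finally show ?thesis .
    qed
  qed
  also have "\<dots> = (\<Sum>u\<in>{0..<p}. fhat p f u * (of_int p * fhat p f u) * (of_int p * fhat p f (-2*u)))"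
    using assms by (simp add: fhat_def)
  also have "\<dots> = (of_int p)^2 * (\<Sum>u\<in>{0..<p}. fhat p f u * fhat p f u * fhat p f (-2*u))"
    by (simp add: sum_distrib_left power2_eq_square mult_ac)
  finally show ?thesis .
qed

lemma Lambda_fourier: assumes "(p::int) > 0"
  shows "Lambda3 p f = (\<Sum>u\<in>{0..<p}. fhat p f u * fhat p f u * fhat p f (-2*u))"
  using assms by (simp add: Lambda_as_triple triple_fourier)

lemma parseval: assumes "(p::int) > 0"
  shows "(\<Sum>u\<in>{0..<p}. fhat p f u * cnj (fhat p f u)) = (1 / of_int p) * (\<Sum>x\<in>{0..<p}. f x * cnj (f x))"
proof -
  have "(\<Sum>x\<in>{0..<p}. f x * cnj (f x)) = (\<Sum>x\<in>{0..<p}. cnj (f x) * (\<Sum>u\<in>{0..<p}. fhat p f u * ee p (u * x)))"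
  proof (intro sum.cong refl)
    fix x assume "x \<in> {0..<p}"
    then have "f x = f (x mod p)" by (simp add: mod_pos_pos_trivial)
    also have "\<dots> = (\<Sum>u\<in>{0..<p}. fhat p f u * ee p (u * x))" by (rule inversion[OF assms])
    finally show "f x * cnj (f x) = cnj (f x) * (\<Sum>u\<in>{0..<p}. fhat p f u * ee p (u * x))" by simp
  qed
  also have "\<dots> = (\<Sum>x\<in>{0..<p}. \<Sum>u\<in>{0..<p}. fhat p f u * (cnj (f x) * ee p (u * x)))"
    by (simp add: sum_distrib_left mult_ac)
  also have "\<dots> = (\<Sum>u\<in>{0..<p}. \<Sum>x\<in>{0..<p}. fhat p f u * (cnj (f x) * ee p (u * x)))"
    by (rule sum.swap)
  also have "\<dots> = (\<Sum>u\<in>{0..<p}. fhat p f u * (\<Sum>x\<in>{0..<p}. cnj (f x) * ee p (u * x)))"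
    by (simp add: sum_distrib_left)
  also have "\<dots> = (\<Sum>u\<in>{0..<p}. fhat p f u * (of_int p * cnj (fhat p f u)))"
  proof (intro sum.cong refl)
    fix u
    have "cnj (fhat p f u) = (1 / of_int p) * (\<Sum>x\<in>{0..<p}. cnj (f x) * ee p (u * x))"
      by (simp add: fhat_def ee_minus)
    then show "fhat p f u * (\<Sum>x\<in>{0..<p}. cnj (f x) * ee p (u * x)) = fhat p f u * (of_int p * cnj (fhat p f u))"
      using assms by simp
  qed
  finally show ?thesis using assms by (simp add: sum_distrib_left mult_ac)
qed

lemma poly_nonneg_piece1:
  fixes c :: real assumes "-1 \<le> c" "c \<le> -3/4"
  shows "0 \<le> c + 1/2 + 7/80*(1/4-c)^2*(1-c)^2"
proof -
  define s where "s = 4*c+4"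
  define t where "t = -3-4*c"
  have s0: "0 \<le> s" and t0: "0 \<le> t" using assms by (auto simp: s_def t_def)
  have "c + 1/2 + 7/80*(1/4-c)^2*(1-c)^2 = 3/64*t^4 + 4*(21/1024)*s*t^3 + 6*(341/40960)*s^2*t^2
     + 4*(83/10240)*s^3*t + 23/1280*s^4"
    unfolding s_def t_def by algebra
  also have "\<dots> \<ge> 0" using s0 t0 by simp
  finally show ?thesis .
qed

lemma poly_nonneg_piece2:
  fixes c :: real assumes "-3/4 \<le> c" "c \<le> -1/2"
  shows "0 \<le> c + 1/2 + 7/80*(1/4-c)^2*(1-c)^2"
proof -
  define s where "s = 4*c+3"
  define t where "t = -2-4*c"
  have s0: "0 \<le> s" and t0: "0 \<le> t" using assms by (auto simp: s_def t_def)
  have "c + 1/2 + 7/80*(1/4-c)^2*(1-c)^2 = 23/1280*t^4 + 4*(57/2048)*s*t^3 + 6*(1957/40960)*s^2*t^2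
     + 4*(311/4096)*s^3*t + 567/5120*s^4"
    unfolding s_def t_def by algebra
  also have "\<dots> \<ge> 0" using s0 t0 by simp
  finally show ?thesis .
qed

lemma poly_bound:
  fixes c :: real assumes "-1 \<le> c" "c \<le> 1"
  shows "0 \<le> c + 1/2 + 7/80*(1/4-c)^2*(1-c)^2" and "c + 1/2 \<le> c + 1/2 + 7/80*(1/4-c)^2*(1-c)^2"
proof -
  show "c + 1/2 \<le> c + 1/2 + 7/80*(1/4-c)^2*(1-c)^2" by simp
  show "0 \<le> c + 1/2 + 7/80*(1/4-c)^2*(1-c)^2"
  proof (cases "c \<le> -1/2")
    case True
    then show ?thesis using assms poly_nonneg_piece1 poly_nonneg_piece2
      by (cases "c \<le> -3/4") auto
  next
    case False
    then have "0 \<le> c + 1/2" by simp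
    then show ?thesis by (simp add: add_nonneg_nonneg)
  qed
qed


definition Pf :: "real \<Rightarrow> real" where "Pf c = c + 1/2 + 7/80*(1/4-c)^2*(1-c)^2"

lemma Pf_trig: "Pf (cos th) = 1609/2560 + 25/32 * cos th + 343/2560 * cos (2*th)
   - 7/128 * cos (3*th) + 7/640 * cos (4*th)"
proof -
  have c2: "cos (2*th) = 2 * (cos th)^2 - 1" by (simp add: cos_double_cos)
  have c3: "cos (3*th) = 4 * (cos th)^3 - 3 * cos th" by (rule cos_treble_cos)
  have "cos (4*th) = cos (2*(2*th))" by simp
  also have "\<dots> = 2 * (cos (2*th))^2 - 1" by (rule cos_double_cos)
  finally have c4': "cos (4*th) = 2 * (cos (2*th))^2 - 1" .
  have c4: "cos (4*th) = 2 * (2 * (cos th)^2 - 1)^2 - 1" by (simp only: c4' c2)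
  show ?thesis unfolding Pf_def c2 c3 c4 by algebra
qed

lemma not_dvd_small: assumes "prime (p::int)" "p > 4" "\<not> p dvd v" "m \<in> {1,2,3,4}"
  shows "\<not> p dvd (m * v)"
proof
  assume "p dvd m * v"
  then have "p dvd m \<or> p dvd v" using assms(1) by (simp add: prime_dvd_mult_iff)
  then have "p dvd m" using assms(3) by simp
  moreover have "0 < m" "m < p" using assms by auto
  ultimately show False using zdvd_imp_le by fastforce
qed

lemma cos_sum_zero: assumes "(p::int) > 0" "\<not> p dvd (m * v)"
  shows "(\<Sum>x\<in>{0..<p}. cos (of_int m * (t - 2 * pi * of_int v * of_int x / of_int p))) = 0"
proof -
  have "\<And>x. cos (of_int m * (t - 2 * pi * of_int v * of_int x / of_int p))
     = Re (cis (of_int m * t) * ee p ((- (m * v)) * x))"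
  proof -
    fix x
    have "cis (of_int m * t) * ee p ((- (m * v)) * x) = cis (of_int m * (t - 2 * pi * of_int v * of_int x / of_int p))"
      unfolding ee_def cis_mult by (simp add: algebra_simps)
    then show "cos (of_int m * (t - 2 * pi * of_int v * of_int x / of_int p))
     = Re (cis (of_int m * t) * ee p ((- (m * v)) * x))" by simp
  qed
  then have "(\<Sum>x\<in>{0..<p}. cos (of_int m * (t - 2 * pi * of_int v * of_int x / of_int p)))
     = Re (cis (of_int m * t) * (\<Sum>x\<in>{0..<p}. ee p ((- (m * v)) * x)))"
    by (simp add: sum_distrib_left)
  also have "(\<Sum>x\<in>{0..<p}. ee p ((- (m * v)) * x)) = 0"
    using orth[OF assms(1), of "-(m*v)"] assms(2) by simp
  finally show ?thesis by simp
qed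


lemma norm_as_Re: "norm (z::complex) = Re (cis (- Arg z) * z)"
proof (cases "z = 0")
  case True then show ?thesis by simp
next
  case False
  then have sg: "sgn z = cis (Arg z)" using Arg_correct by blast
  have "z = of_real (norm z) * sgn z" using False by (simp add: sgn_div_norm scaleR_conv_of_real field_simps)
  then have "cis (- Arg z) * z = of_real (norm z) * (cis (- Arg z) * cis (Arg z))"
    by (metis sg mult.left_commute)
  also have "cis (- Arg z) * cis (Arg z) = 1" by (simp add: cis_mult)
  finally show ?thesis by simp
qed

lemma sumP: assumes "prime (p::int)" "p > 4" "\<not> p dvd v"
  shows "(\<Sum>x\<in>{0..<p}. Pf (cos (t - 2 * pi * of_int v * of_int x / of_int p))) = of_int p * (1609/2560)"
proof -
  define th where "th x = t - 2 * pi * of_int v * of_int x / of_int p" for x :: int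
  have p0: "p > 0" using assms by simp
  have z: "(\<Sum>x\<in>{0..<p}. cos (of_int m * th x)) = 0" if "m \<in> {1,2,3,4}" for m :: int
    unfolding th_def by (rule cos_sum_zero[OF p0 not_dvd_small[OF assms that]])
  have z1: "(\<Sum>x\<in>{0..<p}. cos (th x)) = 0" using z[of 1] by simp
  have z2: "(\<Sum>x\<in>{0..<p}. cos (2 * th x)) = 0" using z[of 2] by simp
  have z3: "(\<Sum>x\<in>{0..<p}. cos (3 * th x)) = 0" using z[of 3] by simp
  have z4: "(\<Sum>x\<in>{0..<p}. cos (4 * th x)) = 0" using z[of 4] by simp
  have "(\<Sum>x\<in>{0..<p}. Pf (cos (th x))) = (\<Sum>x\<in>{0..<p}. 1609/2560 + 25/32 * cos (th x) + 343/2560 * cos (2*th x)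
   - 7/128 * cos (3*th x) + 7/640 * cos (4*th x))" by (simp add: Pf_trig)
  also have "\<dots> = (\<Sum>x\<in>{0..<p}. 1609/2560) + 25/32 * (\<Sum>x\<in>{0..<p}. cos (th x))
     + 343/2560 * (\<Sum>x\<in>{0..<p}. cos (2*th x)) - 7/128 * (\<Sum>x\<in>{0..<p}. cos (3*th x))
     + 7/640 * (\<Sum>x\<in>{0..<p}. cos (4*th x))"
    by (simp add: sum.distrib sum_subtractf sum_distrib_left)
  also have "\<dots> = of_int p * (1609/2560)" using p0 by (simp add: z1 z2 z3 z4)
  finally show ?thesis unfolding th_def .
qed

lemma exp_bound: assumes "prime (p::int)" "p > 4" "\<not> p dvd v" "A \<subseteq> {0..<p}"
  shows "norm (\<Sum>x\<in>A. ee p (- (v * x))) \<le> of_int p * (1609/2560) - real (card A) / 2"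
proof -
  define z where "z = (\<Sum>x\<in>A. ee p (- (v * x)))"
  define t where "t = - Arg z"
  define th where "th x = t - 2 * pi * of_int v * of_int x / of_int p" for x :: int
  have finA: "finite A" using assms(4) finite_subset by blast
  have "norm z = Re (cis t * z)" unfolding t_def by (rule norm_as_Re)
  also have "\<dots> = (\<Sum>x\<in>A. cos (th x))"
  proof -
    have "\<And>x. cis t * ee p (- (v * x)) = cis (th x)"
      unfolding th_def ee_def cis_mult by (simp add: algebra_simps)
    then have "cis t * z = (\<Sum>x\<in>A. cis (th x))" unfolding z_def by (simp add: sum_distrib_left)
    then show ?thesis by (simp add: Re_sum)
  qed
  also have "\<dots> \<le> (\<Sum>x\<in>A. Pf (cos (th x)) - 1/2)"
  proof (rule sum_mono)
    fix x
    have "cos (th x) + 1/2 \<le> Pf (cos (th x))" unfolding Pf_def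
      using poly_bound(2)[of "cos (th x)"] by simp
    then show "cos (th x) \<le> Pf (cos (th x)) - 1/2" by simp
  qed
  also have "\<dots> = (\<Sum>x\<in>A. Pf (cos (th x))) - real (card A) / 2"
    by (simp add: sum_subtractf)
  also have "(\<Sum>x\<in>A. Pf (cos (th x))) \<le> (\<Sum>x\<in>{0..<p}. Pf (cos (th x)))"
  proof (rule sum_mono2)
    show "finite {0..<p}" by simp
    show "A \<subseteq> {0..<p}" by (rule assms(4))
    fix b
    show "0 \<le> Pf (cos (th b))" unfolding Pf_def
      by (rule poly_bound(1)) simp_all
  qed
  also have "(\<Sum>x\<in>{0..<p}. Pf (cos (th x))) = of_int p * (1609/2560)"
    unfolding th_def by (rule sumP[OF assms(1-3)])
  finally show ?thesis unfolding z_def by simp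
qed

lemma fhat_ind: assumes "A \<subseteq> {0..<p}"
  shows "fhat p (ind A) v = (1 / of_int p) * (\<Sum>x\<in>A. ee p (- (v * x)))"
proof -
  have "(\<Sum>x\<in>{0..<p}. ind A x * ee p (- (v * x))) = (\<Sum>x\<in>{0..<p} \<inter> A. ee p (- (v * x)))"
    by (simp add: sum.inter_restrict, intro sum.cong refl, simp add: ind_def)
  also have "{0..<p} \<inter> A = A" using assms by blast
  finally show ?thesis by (simp add: fhat_def)
qed


lemma final_ineq: fixes a :: real assumes "2/3 \<le> a"
  shows "a^3 - (1609/2560 - a/2) * (a - a^2) > 23/100"
proof -
  define s where "s = a - 2/3"
  have s0: "0 \<le> s" using assms by (simp add: s_def)
  have "a^3 - (1609/2560 - a/2) * (a - a^2) - 23/100 = 121/172800 + 11849/7680 * s + 5449/2560 * s^2 + s^3/2"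
    unfolding s_def power2_eq_square power3_eq_cube by (simp add: field_simps)
  moreover have "121/172800 + 11849/7680 * s + 5449/2560 * s^2 + s^3/2 > 0" using s0
    by (simp add: add_pos_nonneg)
  ultimately show ?thesis by linarith
qed

lemma not_dvd_2u: assumes "prime (p::int)" "p > 4" "u \<in> {1..<p}"
  shows "\<not> p dvd (-2 * u)"
proof
  assume "p dvd (-2 * u)"
  then have "p dvd 2 * u" by simp
  then have "p dvd 2 \<or> p dvd u" using assms(1) by (simp add: prime_dvd_mult_iff)
  moreover have "\<not> p dvd 2" using assms(2) zdvd_imp_le[of p 2] by auto
  moreover have "\<not> p dvd u" using assms(3) zdvd_imp_le[of p u] by auto
  ultimately show False by blast
qed

lemma main_bound: assumes "prime (p::int)" "p > 4" "A \<subseteq> {0..<p}" "3 * int (card A) = 2*p + 1"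
  shows "Re (Lambda3 p (ind A)) > 23/100"
proof -
  define f where "f = ind A"
  define a where "a = real (card A) / of_int p"
  define M where "M = 1609/2560 - a/2"
  have p0: "p > 0" using assms by simp
  have a23: "a \<ge> 2/3" unfolding a_def using assms(4) p0
    by (simp add: field_simps)
  have fh0: "fhat p f 0 = of_real a"
    unfolding f_def a_def using assms(3) by (simp add: fhat_ind)
  have bnd: "norm (fhat p f (-2*u)) \<le> M" if "u \<in> {1..<p}" for u
  proof -
    have "norm (fhat p f (-2*u)) = (1 / of_int p) * norm (\<Sum>x\<in>A. ee p (- ((-2*u) * x)))"
      unfolding f_def using assms(3) p0 by (simp add: fhat_ind norm_mult norm_divide)
    also have "\<dots> \<le> (1 / of_int p) * (of_int p * (1609/2560) - real (card A) / 2)"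
      using exp_bound[OF assms(1,2) not_dvd_2u[OF assms(1,2) that] assms(3)] p0
      by (intro mult_left_mono) auto
    also have "\<dots> = M" unfolding M_def a_def using p0 by (simp add: field_simps)
    finally show ?thesis .
  qed
  have pars: "(\<Sum>u\<in>{0..<p}. (norm (fhat p f u))^2) = a"
  proof -
    have "(\<Sum>x\<in>{0..<p}. f x * cnj (f x)) = (\<Sum>x\<in>{0..<p}. f x)"
      unfolding f_def ind_def by (intro sum.cong refl) simp
    also have "\<dots> = of_nat (card A)"
    proof -
      have "(\<Sum>x\<in>{0..<p}. f x) = of_nat (card ({0..<p} \<inter> A))"
        unfolding f_def ind_def by (simp add: sum.If_cases)
      also have "{0..<p} \<inter> A = A" using assms(3) by blast
      finally show ?thesis by simp
    qed
    finally have "(\<Sum>u\<in>{0..<p}. fhat p f u * cnj (fhat p f u)) = of_real a"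
      using parseval[OF p0, of f] unfolding a_def by simp
    then have "complex_of_real (\<Sum>u\<in>{0..<p}. (norm (fhat p f u))^2) = of_real a"
      by (simp only: of_real_sum complex_norm_square)
    then show ?thesis by (simp only: of_real_eq_iff)
  qed
  have split: "{0..<p} = insert 0 {1..<p}" using p0 by auto
  have pars1: "(\<Sum>u\<in>{1..<p}. (norm (fhat p f u))^2) = a - a^2"
    using pars fh0 unfolding split by simp
  define R where "R = (\<Sum>u\<in>{1..<p}. fhat p f u * fhat p f u * fhat p f (-2*u))"
  have L: "Lambda3 p f = of_real (a^3) + R"
    unfolding Lambda_fourier[OF p0] R_def split using fh0 by (simp add: power3_eq_cube)
  have "norm R \<le> (\<Sum>u\<in>{1..<p}. norm (fhat p f u * fhat p f u * fhat p f (-2*u)))"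
    unfolding R_def by (rule norm_sum)
  also have "\<dots> \<le> (\<Sum>u\<in>{1..<p}. (norm (fhat p f u))^2 * M)"
  proof (rule sum_mono)
    fix u assume u: "u \<in> {1..<p}"
    have "norm (fhat p f u * fhat p f u * fhat p f (-2*u)) = (norm (fhat p f u))^2 * norm (fhat p f (-2*u))"
      by (simp add: norm_mult power2_eq_square)
    also have "\<dots> \<le> (norm (fhat p f u))^2 * M"
      by (rule mult_left_mono[OF bnd[OF u]]) simp
    finally show "norm (fhat p f u * fhat p f u * fhat p f (-2*u)) \<le> (norm (fhat p f u))^2 * M" .
  qed
  also have "\<dots> = (a - a^2) * M" by (subst sum_distrib_right[symmetric], subst pars1, rule refl)
  finally have nR: "norm R \<le> (a - a^2) * M" .
  have "Re (Lambda3 p f) = a^3 + Re R" using L by simp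
  also have "\<dots> \<ge> a^3 - norm R" using abs_Re_le_cmod[of R] by linarith
  finally have "Re (Lambda3 p f) \<ge> a^3 - (a - a^2) * M" using nR by linarith
  moreover have "a^3 - (1609/2560 - a/2) * (a - a^2) > 23/100" by (rule final_ineq[OF a23])
  ultimately show ?thesis unfolding f_def M_def by (simp add: mult.commute)
qed

theorem mainTheorem11:
  shows "\<exists>p0::int. \<forall>p::int. \<forall>A::int set.
           prime p \<and> p > p0 \<and> p mod 3 = 1 \<and> A \<subseteq> {0..<p} \<and> 3 * int (card A) = 2*p + 1
           \<longrightarrow> Re (Lambda3 p (ind A)) > 0.23"
proof (intro exI[of _ 4] allI impI)
  fix p :: int and A :: "int set"
  assume h: "prime p \<and> p > 4 \<and> p mod 3 = 1 \<and> A \<subseteq> {0..<p} \<and> 3 * int (card A) = 2*p + 1"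
  have "Re (Lambda3 p (ind A)) > 23/100" using h by (intro main_bound) auto
  then show "Re (Lambda3 p (ind A)) > 0.23" by simp
qed

end
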